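(* Let $r_I>r_0>0$, $v_1,v_2>0$, $w_V>0$ and $w_I$ be real numbers with $0<w_I\le \frac{r_0 w_V v_2}{r_I(v_1+v_2)}$. Let $n\ge 1$ be an integer and $l_1,\dots,l_{n-1}\ge 0$ be real numbers. Consider the optimization problem (P) described in the context. Then the optimal value of (P) is $$\left(\sum_{i=1}^{n}Y_i\right)^*=\frac{\sum_{i=1}^{n-1}\min\{l_i,2r_I\}+2r_I}{v_2}\,w_I .$$ Moreover, this optimal value is attained by the feasible point $$Y_i^*=D_i^*=\frac{\min\{l_i,2r_I\}}{v_2}w_I\ (i=1,\dots,n-1),\qquad Y_n^*=D_n^*=\frac{2r_I}{v_2}w_I .$$
   Context: Model: a vehicle of interest (VoI) moving at speed $v_1$ receives data from $n$ "helper" vehicles moving in the opposite direction at speed $v_2$; consecutive helpers are at distances $l_1,\dots,l_{n-1}$; helpers download from an infrastructure point of radio range $r_I$ at rate $w_I$, and deliver to the VoI over vehicle links of range $r_0$ at rate $w_V$. $D_i$ is the amount of data helper $i$ receives from the infrastructure and $Y_i$ the amount it delivers to the VoI. The optimization problem (P), over real variables $D_1,\dots,D_n,Y_1,\dots,Y_n$, is: maximize $\sum_{i=1}^n Y_i$ subject to (i) $0\le D_i\le \frac{2r_I}{v_2}w_I$ for $i=1,\dots,n$; (ii) $\sum_{i=k_1}^{k_2}D_i\le \frac{\sum_{i=k_1}^{k_2-1}\min\{l_i,2r_I\}+2r_I}{v_2}w_I$ for all $1\le k_1\le k_2\le n$; (iii) $0\le Y_i\le \frac{2r_0}{v_1+v_2}w_V$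 for $i=1,\dots,n$; (iv) $Y_i\le D_i$ for $i=1,\dots,n$; (v) $\sum_{i=k_1}^{k_2}Y_i\le \frac{\sum_{i=k_1}^{k_2-1}\min\{l_i,2r_0\}+2r_0}{v_1+v_2}w_V$ for all $1\le k_1\le k_2\le n$. (Empty sums are zero.) *)

theory Defs
  imports Complex_Main
begin

text \<open>Feasible set of problem (P). Helpers and vehicles indexed 1..n;
  D, Y, l are functions on nat, only the values at indices 1..n (resp. 1..n-1) matter.\<close>

definition feasibleP ::
  "real \<Rightarrow> real \<Rightarrow> real \<Rightarrow> real \<Rightarrow> real \<Rightarrow> real \<Rightarrow> nat \<Rightarrow> (nat \<Rightarrow> real)
   \<Rightarrow> (nat \<Rightarrow> real) \<Rightarrow> (nat \<Rightarrow> real) \<Rightarrow> bool" where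
  "feasibleP rI r0 v1 v2 wI wV n l D Y \<longleftrightarrow>
     (\<forall>i\<in>{1..n}. 0 \<le> D i \<and> D i \<le> 2 * rI / v2 * wI) \<and>
     (\<forall>k1 k2. 1 \<le> k1 \<and> k1 \<le> k2 \<and> k2 \<le> n \<longrightarrow>
        (\<Sum>i=k1..k2. D i) \<le> ((\<Sum>i=k1..<k2. min (l i) (2 * rI)) + 2 * rI) / v2 * wI) \<and>
     (\<forall>i\<in>{1..n}. 0 \<le> Y i \<and> Y i \<le> 2 * r0 / (v1 + v2) * wV) \<and>
     (\<forall>i\<in>{1..n}. Y i \<le> D i) \<and>
     (\<forall>k1 k2. 1 \<le> k1 \<and> k1 \<le> k2 \<and> k2 \<le> n \<longrightarrow>
        (\<Sum>i=k1..k2. Y i) \<le> ((\<Sum>i=k1..<k2. min (l i) (2 * r0)) + 2 * r0) / (v1 + v2) * wV)"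

definition objP :: "nat \<Rightarrow> (nat \<Rightarrow> real) \<Rightarrow> real" where
  "objP n Y = (\<Sum>i=1..n. Y i)"

definition optvalP ::
  "real \<Rightarrow> real \<Rightarrow> real \<Rightarrow> real \<Rightarrow> real \<Rightarrow> real \<Rightarrow> nat \<Rightarrow> (nat \<Rightarrow> real) \<Rightarrow> real" where
  "optvalP rI r0 v1 v2 wI wV n l =
     Sup {objP n Y | D Y. feasibleP rI r0 v1 v2 wI wV n l D Y}"

end

theory Submission
  imports Defs
begin

theorem theorem1:
  fixes rI r0 v1 v2 wI wV :: real and n :: nat and l :: "nat \<Rightarrow> real"
  assumes "rI > r0" and "r0 > 0" and "v1 > 0" and "v2 > 0" and "wV > 0"
    and "0 < wI" and "wI \<le> r0 * wV * v2 / (rI * (v1 + v2))"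
    and "n \<ge> 1"
    and "\<forall>i\<in>{1..n-1}. l i \<ge> 0"
  defines "Dstar \<equiv> (\<lambda>i. if i = n then 2 * rI / v2 * wI else min (l i) (2 * rI) / v2 * wI)"
  shows "optvalP rI r0 v1 v2 wI wV n l = ((\<Sum>i=1..n-1. min (l i) (2 * rI)) + 2 * rI) / v2 * wI
         \<and> (\<forall>D Y. feasibleP rI r0 v1 v2 wI wV n l D Y \<longrightarrow> objP n Y \<le> optvalP rI r0 v1 v2 wI wV n l)
         \<and> feasibleP rI r0 v1 v2 wI wV n l Dstar Dstar
         \<and> objP n Dstar = optvalP rI r0 v1 v2 wI wV n l"
proof -
  note a = assms
  define B where "B = ((\<Sum>i=1..n-1. min (l i) (2 * rI)) + 2 * rI) / v2 * wI"
  define c where "c = wI / v2"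
  define W where "W = wV / (v1 + v2)"
  have c0: "c \<ge> 0" using a unfolding c_def by simp
  have W0: "W > 0" using a unfolding W_def by simp
  have rI0: "rI > 0" using a by linarith
  have hc: "c * rI \<le> r0 * W"
  proof -
    have "wI * (rI * (v1 + v2)) \<le> r0 * wV * v2"
      using a(7) a(1-4) by (simp add: pos_le_divide_eq)
    thus ?thesis unfolding c_def W_def using a(1-4)
      by (simp add: field_simps)
  qed
  have ivl: "{1..n-1} = {1..<n}" using a(8) by auto
  have Ds: "\<And>i. Dstar i = (if i = n then 2 * rI else min (l i) (2 * rI)) * c"
    unfolding Dstar_def c_def by simp
  have upper: "objP n Y \<le> B" if F: "feasibleP rI r0 v1 v2 wI wV n l D Y" for D Y
  proof -
    have "(\<Sum>i=1..n. Y i) \<le> (\<Sum>i=1..n. D i)"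
      using F unfolding feasibleP_def by (intro sum_mono) auto
    also have "\<dots> \<le> ((\<Sum>i=1..<n. min (l i) (2 * rI)) + 2 * rI) / v2 * wI"
      using F a(8) unfolding feasibleP_def by auto
    finally show ?thesis unfolding objP_def B_def ivl .
  qed
  have obj: "objP n Dstar = B"
  proof -
    have "{1..n} = insert n {1..<n}" using a(8) by auto
    hence "objP n Dstar = Dstar n + (\<Sum>i=1..<n. Dstar i)" unfolding objP_def by simp
    also have "(\<Sum>i=1..<n. Dstar i) = (\<Sum>i=1..<n. min (l i) (2 * rI) * c)"
      by (rule sum.cong) (auto simp: Ds)
    also have "(\<Sum>i=1..<n. min (l i) (2 * rI) * c) = (\<Sum>i=1..<n. min (l i) (2 * rI)) * c"
      by (simp add: sum_distrib_right)
    finally show ?thesis unfolding B_def ivl using Ds[of n] unfolding c_def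
      by (simp add: algebra_simps add_divide_distrib)
  qed
  have lnn: "\<And>i. 1 \<le> i \<Longrightarrow> i < n \<Longrightarrow> l i \<ge> 0" using a(9) by auto
  have term1: "min (l i) (2 * rI) * c \<le> min (l i) (2 * r0) * W" if "1 \<le> i" "i < n" for i
  proof -
    have li: "l i \<ge> 0" using lnn that by auto
    have "min (l i) (2 * rI) * c * rI \<le> min (l i) (2 * rI) * (r0 * W)"
      using hc li rI0 by (simp add: mult.assoc mult_left_mono)
    also have "\<dots> \<le> min (l i) (2 * r0) * W * rI"
    proof (cases "l i \<le> 2 * r0")
      case True
      hence "l i \<le> 2 * rI" using a(1) by linarith
      thus ?thesis using True a W0 li by (simp add: mult_left_mono mult_right_mono mult.commute mult.left_commute)
    next
      case False
      have "min (l i) (2 * rI) * r0 \<le> 2 * rI * r0" using a(2) by (simp add: mult_right_mono)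
      hence "min (l i) (2 * rI) * (r0 * W) \<le> 2 * r0 * W * rI" using W0
        by (metis mult.assoc mult.commute mult_right_mono less_imp_le)
      thus ?thesis using False by simp
    qed
    finally show ?thesis using rI0 by simp
  qed
  have feas: "feasibleP rI r0 v1 v2 wI wV n l Dstar Dstar"
    unfolding feasibleP_def
  proof (intro conjI ballI allI impI)
    fix i assume i: "i \<in> {1..n}"
    show "0 \<le> Dstar i" using c0 rI0 lnn[of i] i by (auto simp: Ds)
    have "Dstar i \<le> 2 * rI * c" using c0 rI0 by (auto simp: Ds mult_right_mono)
    thus "Dstar i \<le> 2 * rI / v2 * wI" unfolding c_def by simp
    show "0 \<le> Dstar i" using c0 rI0 lnn[of i] i by (auto simp: Ds)
    show "Dstar i \<le> Dstar i" by simp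
    have "Dstar i \<le> 2 * rI * c" using c0 rI0 by (auto simp: Ds mult_right_mono)
    also have "\<dots> \<le> 2 * r0 * W" using hc by (simp add: mult.commute)
    finally show "Dstar i \<le> 2 * r0 / (v1 + v2) * wV" unfolding W_def by simp
  next
    fix k1 k2 :: nat assume k: "1 \<le> k1 \<and> k1 \<le> k2 \<and> k2 \<le> n"
    have split: "(\<Sum>i=k1..k2. Dstar i) = (\<Sum>i=k1..<k2. Dstar i) + Dstar k2"
      using k by (metis atLeastLessThanSuc_atLeastAtMost sum.atLeastLessThan_Suc)
    have eq: "(\<Sum>i=k1..<k2. Dstar i) = (\<Sum>i=k1..<k2. min (l i) (2 * rI) * c)"
      using k by (intro sum.cong) (auto simp: Ds)
    have lk: "Dstar k2 \<le> 2 * rI * c" using c0 rI0 by (auto simp: Ds mult_right_mono)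
    show "(\<Sum>i=k1..k2. Dstar i) \<le> ((\<Sum>i=k1..<k2. min (l i) (2 * rI)) + 2 * rI) / v2 * wI"
    proof -
      have r: "((\<Sum>i=k1..<k2. min (l i) (2 * rI)) + 2 * rI) / v2 * wI
           = (\<Sum>i=k1..<k2. min (l i) (2 * rI) * c) + 2 * rI * c"
        unfolding c_def sum_distrib_right[symmetric] by (simp add: algebra_simps add_divide_distrib)
      show ?thesis unfolding r split eq using lk by simp
    qed
    have m1: "(\<Sum>i=k1..<k2. min (l i) (2 * rI) * c) \<le> (\<Sum>i=k1..<k2. min (l i) (2 * r0) * W)"
      using k by (intro sum_mono term1) auto
    moreover have m2: "Dstar k2 \<le> 2 * r0 * W" using lk hc by (simp add: mult.commute)
    ultimately show "(\<Sum>i=k1..k2. Dstar i) \<le> ((\<Sum>i=k1..<k2. min (l i) (2 * r0)) + 2 * r0) / (v1 + v2) * wV"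
    proof -
      have r: "((\<Sum>i=k1..<k2. min (l i) (2 * r0)) + 2 * r0) / (v1 + v2) * wV
           = (\<Sum>i=k1..<k2. min (l i) (2 * r0) * W) + 2 * r0 * W"
        unfolding W_def sum_distrib_right[symmetric] by (simp add: algebra_simps add_divide_distrib)
      show ?thesis unfolding r split eq using m1 m2 by simp
    qed
  qed
  have sup: "optvalP rI r0 v1 v2 wI wV n l = B"
    unfolding optvalP_def
  proof (rule cSup_eq_maximum)
    show "B \<in> {objP n Y |D Y. feasibleP rI r0 v1 v2 wI wV n l D Y}"
      using feas obj by blast
  next
    fix x assume "x \<in> {objP n Y |D Y. feasibleP rI r0 v1 v2 wI wV n l D Y}"
    thus "x \<le> B" using upper by blast
  qed
  show ?thesis using sup upper feas obj unfolding B_def by auto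
qed

end
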